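(* Let $L$ be a geometric lattice of rank $r+1$ with $n$ atoms. Then for all $S\subseteq[r]$, $h_S(L)\le h_S(\mathscr{B}_{r+1,n})$.
   Context: A geometric lattice is a finite graded atomic lattice whose rank function $\rho$ satisfies $\rho(x\vee y)+\rho(x\wedge y)\le \rho(x)+\rho(y)$. For a graded poset $P$ of rank $r+1$ with $\hat 0,\hat 1$ and $S\subseteq[r]=\{1,\dots,r\}$, $f_S(P)$ is the number of chains in $P$ whose elements have ranks exactly the elements of $S$ (one element of each rank in $S$), and the flag $h$-vector is $h_S(P)=\sum_{T\subseteq S}(-1)^{|S|-|T|}f_T(P)$. The truncated Boolean algebra $\mathscr{B}_{r+1,n}$ ($n\ge r+1$) is the poset consisting of all subsets of $[n]$ of cardinality at most $r$, ordered by inclusion, together with an added maximum element $\hat 1$; it is the rank $r+1$ geometric lattice on $n$ atoms in which every $(r+1)$-subset of atoms is a basis. *)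

theory Defs
  imports Main
begin

definition partial_order_on' :: "'a set \<Rightarrow> ('a \<Rightarrow> 'a \<Rightarrow> bool) \<Rightarrow> bool" where
  "partial_order_on' P le \<longleftrightarrow>
     (\<forall>x\<in>P. le x x) \<and>
     (\<forall>x\<in>P. \<forall>y\<in>P. le x y \<and> le y x \<longrightarrow> x = y) \<and>
     (\<forall>x\<in>P. \<forall>y\<in>P. \<forall>z\<in>P. le x y \<and> le y z \<longrightarrow> le x z)"

definition is_chain :: "'a set \<Rightarrow> ('a \<Rightarrow> 'a \<Rightarrow> bool) \<Rightarrow> 'a set \<Rightarrow> bool" where
  "is_chain P le C \<longleftrightarrow> C \<subseteq> P \<and> (\<forall>x\<in>C. \<forall>y\<in>C. le x y \<or> le y x)"

definition height :: "'a set \<Rightarrow> ('a \<Rightarrow> 'a \<Rightarrow> bool) \<Rightarrow> 'a \<Rightarrow> nat" where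
  "height P le x = Max {card C | C. is_chain P le C \<and> (\<forall>c\<in>C. le c x)} - 1"

definition covers :: "'a set \<Rightarrow> ('a \<Rightarrow> 'a \<Rightarrow> bool) \<Rightarrow> 'a \<Rightarrow> 'a \<Rightarrow> bool" where
  "covers P le x y \<longleftrightarrow> x \<in> P \<and> y \<in> P \<and> le x y \<and> x \<noteq> y \<and>
     \<not> (\<exists>z\<in>P. le x z \<and> le z y \<and> z \<noteq> x \<and> z \<noteq> y)"

text \<open>Finite graded poset with \<open>\<hat>0\<close> and \<open>\<hat>1\<close>: the height function is a rank function
  (increases by exactly one along every cover relation), equivalently all maximal chains
  have the same length.\<close>
definition graded_poset :: "'a set \<Rightarrow> ('a \<Rightarrow> 'a \<Rightarrow> bool) \<Rightarrow> bool" where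
  "graded_poset P le \<longleftrightarrow> finite P \<and> partial_order_on' P le \<and>
     (\<exists>b\<in>P. \<forall>x\<in>P. le b x) \<and> (\<exists>t\<in>P. \<forall>x\<in>P. le x t) \<and>
     (\<forall>x y. covers P le x y \<longrightarrow> height P le y = height P le x + 1)"

definition poset_rank :: "'a set \<Rightarrow> ('a \<Rightarrow> 'a \<Rightarrow> bool) \<Rightarrow> nat" where
  "poset_rank P le = Max (height P le ` P)"

definition is_lub :: "'a set \<Rightarrow> ('a \<Rightarrow> 'a \<Rightarrow> bool) \<Rightarrow> 'a set \<Rightarrow> 'a \<Rightarrow> bool" where
  "is_lub P le A x \<longleftrightarrow> x \<in> P \<and> (\<forall>a\<in>A. le a x) \<and> (\<forall>y\<in>P. (\<forall>a\<in>A. le a y) \<longrightarrow> le x y)"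

definition is_glb :: "'a set \<Rightarrow> ('a \<Rightarrow> 'a \<Rightarrow> bool) \<Rightarrow> 'a set \<Rightarrow> 'a \<Rightarrow> bool" where
  "is_glb P le A x \<longleftrightarrow> x \<in> P \<and> (\<forall>a\<in>A. le x a) \<and> (\<forall>y\<in>P. (\<forall>a\<in>A. le y a) \<longrightarrow> le y x)"

definition is_lattice :: "'a set \<Rightarrow> ('a \<Rightarrow> 'a \<Rightarrow> bool) \<Rightarrow> bool" where
  "is_lattice P le \<longleftrightarrow> (\<forall>x\<in>P. \<forall>y\<in>P. (\<exists>j. is_lub P le {x, y} j) \<and> (\<exists>m. is_glb P le {x, y} m))"

definition atoms :: "'a set \<Rightarrow> ('a \<Rightarrow> 'a \<Rightarrow> bool) \<Rightarrow> 'a set" where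
  "atoms P le = {a \<in> P. height P le a = 1}"

definition atomic :: "'a set \<Rightarrow> ('a \<Rightarrow> 'a \<Rightarrow> bool) \<Rightarrow> bool" where
  "atomic P le \<longleftrightarrow> (\<forall>x\<in>P. is_lub P le {a \<in> atoms P le. le a x} x)"

definition geometric_lattice :: "'a set \<Rightarrow> ('a \<Rightarrow> 'a \<Rightarrow> bool) \<Rightarrow> bool" where
  "geometric_lattice P le \<longleftrightarrow> graded_poset P le \<and> is_lattice P le \<and> atomic P le \<and>
     (\<forall>x\<in>P. \<forall>y\<in>P. \<forall>j m. is_lub P le {x, y} j \<and> is_glb P le {x, y} m \<longrightarrow>
        height P le j + height P le m \<le> height P le x + height P le y)"

definition flag_f :: "'a set \<Rightarrow> ('a \<Rightarrow> 'a \<Rightarrow> bool) \<Rightarrow> nat set \<Rightarrow> nat" where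
  "flag_f P le S = card {C. is_chain P le C \<and> card C = card S \<and> height P le ` C = S}"

definition flag_h :: "'a set \<Rightarrow> ('a \<Rightarrow> 'a \<Rightarrow> bool) \<Rightarrow> nat set \<Rightarrow> int" where
  "flag_h P le S = (\<Sum>T\<in>Pow S. (-1) ^ (card S - card T) * int (flag_f P le T))"

text \<open>Truncated Boolean algebra B_{r+1,n}: subsets of {1..n} of size at most r
  (as Some A) plus an added maximum None.\<close>
definition trunc_bool_carrier :: "nat \<Rightarrow> nat \<Rightarrow> nat set option set" where
  "trunc_bool_carrier r n = {Some A | A. A \<subseteq> {1..n} \<and> card A \<le> r} \<union> {None}"

definition trunc_bool_le :: "nat set option \<Rightarrow> nat set option \<Rightarrow> bool" where
  "trunc_bool_le x y = (case y of None \<Rightarrow> True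
      | Some B \<Rightarrow> (case x of None \<Rightarrow> False | Some A \<Rightarrow> A \<subseteq> B))"

end

theory Submission
  imports Defs
begin


lemma chain_sub: "is_chain P le C \<Longrightarrow> C \<subseteq> P"
  by (simp add: is_chain_def)

lemma ht_set_fin: "finite P \<Longrightarrow> finite {card C |C. is_chain P le C \<and> (\<forall>c\<in>C. le c x)}"
proof -
  assume "finite P"
  have "{card C |C. is_chain P le C \<and> (\<forall>c\<in>C. le c x)} \<subseteq> card ` Pow P"
    by (auto simp: is_chain_def)
  thus ?thesis using \<open>finite P\<close> finite_subset by blast
qed

lemma ht_set_ne: "0 \<in> {card C |C. is_chain P le C \<and> (\<forall>c\<in>C. le c x)}"
  by (rule CollectI, rule exI[of _ "{}"]) (simp add: is_chain_def)

lemma ne_of_mem: "a \<in> A \<Longrightarrow> A \<noteq> {}" by auto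

lemma ht_ge:
  assumes "finite P" "is_chain P le C" "\<forall>c\<in>C. le c x"
  shows "card C \<le> height P le x + 1"
proof -
  have "card C \<le> Max {card C |C. is_chain P le C \<and> (\<forall>c\<in>C. le c x)}"
    using assms by (intro Max_ge ht_set_fin) auto
  thus ?thesis unfolding height_def by linarith
qed

lemma ht_attain:
  assumes "finite P" "partial_order_on' P le" "x \<in> P"
  shows "\<exists>C. is_chain P le C \<and> (\<forall>c\<in>C. le c x) \<and> card C = height P le x + 1"
proof -
  let ?M = "{card C |C. is_chain P le C \<and> (\<forall>c\<in>C. le c x)}"
  have ne: "?M \<noteq> {}" using ht_set_ne[of P le x] by (rule ne_of_mem)
  have "Max ?M \<in> ?M" using ht_set_fin[OF assms(1)] ne by (rule Max_in)
  then obtain C where C: "is_chain P le C" "\<forall>c\<in>C. le c x" "card C = Max ?M" by (smt (verit) mem_Collect_eq)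
  have lx: "le x x" using assms(2,3) unfolding partial_order_on'_def by blast
  have "is_chain P le {x}" using assms(3) lx by (simp add: is_chain_def)
  moreover have "\<forall>c\<in>{x}. le c x" using lx by simp
  ultimately have "card {x} \<in> ?M" by (intro CollectI exI[of _ "{x}"]) simp
  hence "card {x} \<le> Max ?M" using ht_set_fin[OF assms(1)] by (rule Max_ge[rotated])
  hence "1 \<le> Max ?M" by simp
  hence "card C = height P le x + 1" using C(3) unfolding height_def by simp
  thus ?thesis using C(1,2) by blast
qed

lemma ht_lt:
  assumes "finite P" "partial_order_on' P le" "x \<in> P" "y \<in> P" "le x y" "x \<noteq> y"
  shows "height P le x < height P le y"
proof -
  obtain C where C: "is_chain P le C" "\<forall>c\<in>C. le c x" "card C = height P le x + 1"
    using ht_attain[OF assms(1-3)] by blast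
  have fC: "finite C" using C(1) assms(1) by (meson chain_sub finite_subset)
  have po: "\<forall>x\<in>P. le x x" "\<forall>x\<in>P. \<forall>y\<in>P. le x y \<and> le y x \<longrightarrow> x = y"
     "\<forall>x\<in>P. \<forall>y\<in>P. \<forall>z\<in>P. le x y \<and> le y z \<longrightarrow> le x z"
    using assms(2) unfolding partial_order_on'_def by blast+
  have yC: "y \<notin> C"
  proof
    assume "y \<in> C"
    hence "le y x" using C(2) by blast
    thus False using po(2) assms(3-6) by blast
  qed
  have CP: "C \<subseteq> P" using C(1) by (rule chain_sub)
  have cy: "le c y" if "c \<in> C" for c
  proof -
    have "le c x" "c \<in> P" using C(2) CP that by auto
    thus ?thesis using po(3) assms(3,4,5) by blast
  qed
  have "le y y" using po(1) assms(4) by blast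
  hence "is_chain P le (insert y C)" using C(1) CP assms(4) cy unfolding is_chain_def by auto
  moreover have "\<forall>c\<in>insert y C. le c y" using cy \<open>le y y\<close> by auto
  ultimately have "card (insert y C) \<le> height P le y + 1" by (rule ht_ge[OF assms(1)])
  thus ?thesis using yC fC C(3) by simp
qed

lemma ht_mono:
  assumes "finite P" "partial_order_on' P le" "x \<in> P" "y \<in> P" "le x y"
  shows "height P le x \<le> height P le y"
  using ht_lt[OF assms] by (cases "x = y") auto

lemma ht_eq:
  assumes "finite P" "partial_order_on' P le" "x \<in> P" "y \<in> P" "le x y" "height P le x = height P le y"
  shows "x = y"
  using ht_lt[OF assms(1-5)] assms(6) by auto



locale GL =
  fixes P :: "'a set" and le :: "'a \<Rightarrow> 'a \<Rightarrow> bool" and lab :: "'a \<Rightarrow> nat"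
  assumes fin: "finite P"
    and po: "partial_order_on' P le"
    and has_bo: "\<exists>b\<in>P. \<forall>x\<in>P. le b x"
    and has_tp: "\<exists>t\<in>P. \<forall>x\<in>P. le x t"
    and G3: "\<And>x y. x \<in> P \<Longrightarrow> y \<in> P \<Longrightarrow> le x y \<Longrightarrow> x \<noteq> y \<Longrightarrow>
               \<exists>a\<in>atoms P le. le a y \<and> \<not> le a x"
    and G4: "\<And>x a. x \<in> P \<Longrightarrow> a \<in> atoms P le \<Longrightarrow> \<not> le a x \<Longrightarrow>
               \<exists>j. is_lub P le {x, a} j \<and> height P le j \<le> height P le x + 1"
    and inj: "inj_on lab (atoms P le)"
begin

abbreviation "ht \<equiv> height P le"
abbreviation "At \<equiv> atoms P le"

lemma refl: "x \<in> P \<Longrightarrow> le x x"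
  using po unfolding partial_order_on'_def by blast
lemma antisym: "x \<in> P \<Longrightarrow> y \<in> P \<Longrightarrow> le x y \<Longrightarrow> le y x \<Longrightarrow> x = y"
  using po unfolding partial_order_on'_def by blast
lemma trans: "x \<in> P \<Longrightarrow> y \<in> P \<Longrightarrow> z \<in> P \<Longrightarrow> le x y \<Longrightarrow> le y z \<Longrightarrow> le x z"
  using po unfolding partial_order_on'_def by blast

lemma hlt: "x \<in> P \<Longrightarrow> y \<in> P \<Longrightarrow> le x y \<Longrightarrow> x \<noteq> y \<Longrightarrow> ht x < ht y"
  using ht_lt[OF fin po] by blast
lemma hmono: "x \<in> P \<Longrightarrow> y \<in> P \<Longrightarrow> le x y \<Longrightarrow> ht x \<le> ht y"
  using ht_mono[OF fin po] by blast
lemma heq: "x \<in> P \<Longrightarrow> y \<in> P \<Longrightarrow> le x y \<Longrightarrow> ht x = ht y \<Longrightarrow> x = y"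
  using ht_eq[OF fin po] by blast

definition "bo = (THE b. b \<in> P \<and> (\<forall>x\<in>P. le b x))"
definition "tp = (THE t. t \<in> P \<and> (\<forall>x\<in>P. le x t))"

lemma bo: "bo \<in> P" "\<And>x. x \<in> P \<Longrightarrow> le bo x"
proof -
  obtain b where b: "b \<in> P" "\<forall>x\<in>P. le b x" using has_bo by blast
  have "(THE b. b \<in> P \<and> (\<forall>x\<in>P. le b x)) = b"
    by (rule the_equality) (use b antisym in blast)+
  thus "bo \<in> P" "\<And>x. x \<in> P \<Longrightarrow> le bo x" using b unfolding bo_def by auto
qed

lemma tp: "tp \<in> P" "\<And>x. x \<in> P \<Longrightarrow> le x tp"
proof -
  obtain b where b: "b \<in> P" "\<forall>x\<in>P. le x b" using has_tp by blast
  have "(THE b. b \<in> P \<and> (\<forall>x\<in>P. le x b)) = b"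
    by (rule the_equality) (use b antisym in blast)+
  thus "tp \<in> P" "\<And>x. x \<in> P \<Longrightarrow> le x tp" using b unfolding tp_def by auto
qed

lemma ht_bo: "ht bo = 0"
proof -
  obtain C where C: "is_chain P le C" "\<forall>c\<in>C. le c bo" "card C = ht bo + 1"
    using ht_attain[OF fin po bo(1)] by blast
  have "C \<subseteq> {bo}"
  proof
    fix c assume "c \<in> C"
    hence "c \<in> P" "le c bo" using C(1,2) chain_sub by blast+
    thus "c \<in> {bo}" using antisym[of c bo] bo by blast
  qed
  hence "card C \<le> 1" using card_mono[of "{bo}" C] by simp
  thus ?thesis using C(3) by simp
qed

lemma ht_tp: "x \<in> P \<Longrightarrow> ht x \<le> ht tp"
  using hmono tp by blast

lemma At_P: "a \<in> At \<Longrightarrow> a \<in> P" and At_ht: "a \<in> At \<Longrightarrow> ht a = 1"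
  unfolding atoms_def by auto

lemma At_not_bo: "a \<in> At \<Longrightarrow> \<not> le a bo"
proof
  assume a: "a \<in> At" "le a bo"
  have aP: "a \<in> P" using At_P a(1) .
  have "a = bo" using antisym[OF aP bo(1) a(2) bo(2)[OF aP]] .
  moreover have "ht a = 1" using At_ht a(1) .
  ultimately show False using ht_bo by simp
qed

lemma At_sub: "At \<subseteq> P" using At_P by blast
lemma finAt: "finite At" using finite_subset[OF At_sub fin] .

definition "Lb x = lab ` {a \<in> At. le a x}"
definition "E = lab ` At"

lemma Lb_mono: "x \<in> P \<Longrightarrow> y \<in> P \<Longrightarrow> le x y \<Longrightarrow> Lb x \<subseteq> Lb y"
  unfolding Lb_def using trans At_P by blast

lemma Lb_E: "Lb x \<subseteq> E" unfolding Lb_def E_def by blast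

lemma Lb_bo: "Lb bo = {}" unfolding Lb_def using At_not_bo by auto

lemma Lb_tp: "Lb tp = E" unfolding Lb_def E_def using tp At_P by auto

lemma fin_E: "finite E" unfolding E_def using finAt by simp
lemma fin_Lb: "finite (Lb x)" using fin_E Lb_E finite_subset by blast

lemma Lb_mem: "m \<in> Lb y - Lb x \<Longrightarrow> \<exists>a\<in>At. lab a = m \<and> le a y \<and> \<not> le a x"
  unfolding Lb_def by blast

lemma Lb_memI: "a \<in> At \<Longrightarrow> le a y \<Longrightarrow> \<not> le a x \<Longrightarrow> lab a \<in> Lb y - Lb x"
  unfolding Lb_def using inj inj_on_eq_iff by fastforce

lemma Lb_diff_ne: "x \<in> P \<Longrightarrow> y \<in> P \<Longrightarrow> le x y \<Longrightarrow> x \<noteq> y \<Longrightarrow> Lb y - Lb x \<noteq> {}"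
  using G3 Lb_memI by blast

definition "atm m = the_inv_into At lab m"

lemma atm_lab: "a \<in> At \<Longrightarrow> atm (lab a) = a"
  unfolding atm_def using the_inv_into_f_f[OF inj] by blast

definition "jn x a = (SOME j. is_lub P le {x, a} j)"

lemma jn:
  assumes "x \<in> P" "a \<in> At" "\<not> le a x"
  shows "jn x a \<in> P" "le x (jn x a)" "le a (jn x a)" "ht (jn x a) = ht x + 1"
    "\<And>y. y \<in> P \<Longrightarrow> le x y \<Longrightarrow> le a y \<Longrightarrow> le (jn x a) y"
proof -
  obtain j where j: "is_lub P le {x, a} j" "ht j \<le> ht x + 1" using G4[OF assms] by blast
  have l: "is_lub P le {x, a} (jn x a)" unfolding jn_def using j(1) by (rule someI)
  have u: "is_lub P le {x, a} u \<Longrightarrow> u = j" for u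
    using j(1) antisym unfolding is_lub_def by (metis insertCI)
  hence jj: "jn x a = j" using l by blast
  show "jn x a \<in> P" "le x (jn x a)" "le a (jn x a)"
     "\<And>y. y \<in> P \<Longrightarrow> le x y \<Longrightarrow> le a y \<Longrightarrow> le (jn x a) y"
    using l unfolding is_lub_def by auto
  moreover have "x \<noteq> jn x a" using \<open>le a (jn x a)\<close> assms(3) by auto
  ultimately have "ht x < ht (jn x a)" using hlt assms(1) by blast
  thus "ht (jn x a) = ht x + 1" using j(2) jj by simp
qed

lemma jn_unique:
  assumes "x \<in> P" "z \<in> P" "a \<in> At" "le x z" "le a z" "\<not> le a x" "ht z = ht x + 1"
  shows "z = jn x a"
proof -
  have "le (jn x a) z" using jn(5)[OF assms(1,3,6) assms(2,4,5)] .
  thus ?thesis using heq[of "jn x a" z] jn[OF assms(1,3,6)] assms by simp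
qed

definition "stp x y = jn x (atm (Min (Lb y - Lb x)))"

lemma stp:
  assumes "x \<in> P" "y \<in> P" "le x y" "x \<noteq> y"
  shows "stp x y \<in> P" "le x (stp x y)" "le (stp x y) y" "ht (stp x y) = ht x + 1"
    "Min (Lb (stp x y) - Lb x) = Min (Lb y - Lb x)"
proof -
  let ?m = "Min (Lb y - Lb x)"
  have ne: "Lb y - Lb x \<noteq> {}" using Lb_diff_ne assms by blast
  have "?m \<in> Lb y - Lb x" using ne fin_Lb by (intro Min_in) auto
  then obtain a where a: "a \<in> At" "lab a = ?m" "le a y" "\<not> le a x" using Lb_mem by blast
  have s: "stp x y = jn x a" unfolding stp_def using a(2) atm_lab[OF a(1)] by simp
  note J = jn[OF assms(1) a(1,4)]
  show "stp x y \<in> P" "le x (stp x y)" "le (stp x y) y" "ht (stp x y) = ht x + 1"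
    using J assms a s by auto
  have sub: "Lb (stp x y) - Lb x \<subseteq> Lb y - Lb x"
    using Lb_mono[of "stp x y" y] J assms s a by auto
  have mem: "?m \<in> Lb (stp x y) - Lb x" using Lb_memI[OF a(1)] J(3) a s by auto
  show "Min (Lb (stp x y) - Lb x) = ?m"
  proof (rule order.antisym)
    show "Min (Lb (stp x y) - Lb x) \<le> ?m" using mem fin_Lb by (intro Min_le) auto
    show "?m \<le> Min (Lb (stp x y) - Lb x)" using mem sub fin_Lb ne
      by (intro Min_antimono) auto
  qed
qed

end



lemma mono_steps:
  fixes f :: "nat \<Rightarrow> nat"
  assumes "\<And>j. a \<le> j \<Longrightarrow> j < b \<Longrightarrow> f j \<le> f (Suc j)" "a \<le> b"
  shows "f a \<le> f b"
  using assms
proof (induction b)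
  case 0 thus ?case by simp
next
  case (Suc b)
  show ?case
  proof (cases "a = Suc b")
    case True thus ?thesis by simp
  next
    case False
    hence "a \<le> b" using Suc.prems(2) by simp
    hence "f a \<le> f b" using Suc.IH Suc.prems(1) by simp
    also have "f b \<le> f (Suc b)" using Suc.prems(1) \<open>a \<le> b\<close> by simp
    finally show ?thesis .
  qed
qed

context GL
begin

definition "TC T = {C. is_chain P le C \<and> card C = card T \<and> ht ` C = T}"
definition "elt C i = (THE c. c \<in> C \<and> ht c = i)"
definition "res T C = {c \<in> C. ht c \<in> T}"

lemma flag_f_TC: "flag_f P le T = card (TC T)"
  unfolding flag_f_def TC_def by simp

lemma TC_P: "C \<in> TC T \<Longrightarrow> C \<subseteq> P"
  unfolding TC_def is_chain_def by blast

lemma TC_fin: "C \<in> TC T \<Longrightarrow> finite C"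
  using TC_P fin finite_subset by metis

lemma TC_inj: assumes "C \<in> TC T" shows "inj_on ht C"
proof -
  have "card (ht ` C) = card C" using assms unfolding TC_def by simp
  thus ?thesis using TC_fin[OF assms] inj_on_iff_eq_card by blast
qed

lemma TC_elt:
  assumes "C \<in> TC T" "c \<in> C" shows "elt C (ht c) = c"
  unfolding elt_def
proof (rule the_equality)
  show "c \<in> C \<and> ht c = ht c" using assms by simp
  fix d assume "d \<in> C \<and> ht d = ht c"
  thus "d = c" using TC_inj[OF assms(1)] assms(2) inj_on_eq_iff by metis
qed

lemma TC_elt2:
  assumes "C \<in> TC T" "t \<in> T" shows "elt C t \<in> C" "ht (elt C t) = t"
proof -
  obtain c where "c \<in> C" "ht c = t" using assms unfolding TC_def by blast
  thus "elt C t \<in> C" "ht (elt C t) = t" using TC_elt[OF assms(1)] by auto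
qed

lemma chain_le:
  assumes "is_chain P le C" "c \<in> C" "d \<in> C" "ht c \<le> ht d"
  shows "le c d"
proof -
  have cP: "c \<in> P" and dP: "d \<in> P" using assms chain_sub by blast+
  have "le c d \<or> le d c" using assms unfolding is_chain_def by blast
  thus ?thesis
  proof
    assume "le d c"
    hence "ht d \<le> ht c" using hmono dP cP by blast
    hence "d = c" using heq[OF dP cP \<open>le d c\<close>] assms(4) by simp
    thus ?thesis using refl cP by simp
  qed
qed

lemma TC_le: "C \<in> TC T \<Longrightarrow> c \<in> C \<Longrightarrow> d \<in> C \<Longrightarrow> ht c \<le> ht d \<Longrightarrow> le c d"
  using chain_le unfolding TC_def by blast

definition "FC k = TC {1..k}"
definition "gC k C i = (if i = 0 then bo else if i \<le> k then elt C i else tp)"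
definition "lb k C i = Min (Lb (gC k C i) - Lb (gC k C (i - 1)))"
definition "Des k C = {i \<in> {1..k}. lb k C (Suc i) < lb k C i}"
definition "tgt k T i = (LEAST t. t \<in> insert (Suc k) T \<and> i < t)"

lemma FC_fin: "finite (FC k)"
proof -
  have "FC k \<subseteq> Pow P" unfolding FC_def using TC_P by blast
  thus ?thesis using fin finite_Pow_iff finite_subset by metis
qed

context
  fixes k :: nat
  assumes kt: "k < ht tp"
begin

lemma gC_P: assumes "C \<in> FC k" shows "gC k C i \<in> P"
proof -
  have "1 \<le> i \<Longrightarrow> i \<le> k \<Longrightarrow> elt C i \<in> P"
    using TC_elt2(1)[of C "{1..k}" i] TC_P[of C "{1..k}"] assms unfolding FC_def by auto
  thus ?thesis unfolding gC_def using bo tp by auto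
qed

lemma gC_ht: "C \<in> FC k \<Longrightarrow> i \<le> k \<Longrightarrow> ht (gC k C i) = i"
  unfolding gC_def FC_def using ht_bo TC_elt2 by auto

lemma gC_ht_gt: "C \<in> FC k \<Longrightarrow> i \<le> k \<Longrightarrow> i < j \<Longrightarrow> i < ht (gC k C j)"
proof -
  assume a: "C \<in> FC k" "i \<le> k" "i < j"
  show ?thesis
  proof (cases "j \<le> k")
    case True thus ?thesis using gC_ht a by simp
  next
    case False thus ?thesis using a kt unfolding gC_def by auto
  qed
qed

lemma gC_in: "C \<in> FC k \<Longrightarrow> 1 \<le> i \<Longrightarrow> i \<le> k \<Longrightarrow> gC k C i \<in> C"
  unfolding gC_def FC_def using TC_elt2 by auto

lemma gC_le: assumes "C \<in> FC k" "i \<le> j" shows "le (gC k C i) (gC k C j)"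
proof -
  consider "i = 0" | "j > k" | "1 \<le> i" "j \<le> k" using assms by linarith
  thus ?thesis
  proof cases
    case 1 thus ?thesis using bo gC_P[OF assms(1)] unfolding gC_def by auto
  next
    case 2 thus ?thesis using tp gC_P[OF assms(1), of i] unfolding gC_def[of k C j] by auto
  next
    case 3
    hence "gC k C i \<in> C" "gC k C j \<in> C" using gC_in assms by auto
    moreover have "ht (gC k C i) \<le> ht (gC k C j)" using gC_ht assms 3 by simp
    ultimately show ?thesis using TC_le assms(1) unfolding FC_def by blast
  qed
qed

lemma gC_ne: "C \<in> FC k \<Longrightarrow> i \<le> k \<Longrightarrow> i < j \<Longrightarrow> gC k C i \<noteq> gC k C j"
  using gC_ht gC_ht_gt by fastforce

lemma gC_Lb: "C \<in> FC k \<Longrightarrow> i \<le> j \<Longrightarrow> Lb (gC k C i) \<subseteq> Lb (gC k C j)"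
  using Lb_mono gC_P gC_le by blast

lemma lb_mem:
  assumes "C \<in> FC k" "1 \<le> i" "i \<le> Suc k"
  shows "lb k C i \<in> Lb (gC k C i) - Lb (gC k C (i - 1))"
    "\<And>m. m \<in> Lb (gC k C i) - Lb (gC k C (i - 1)) \<Longrightarrow> lb k C i \<le> m"
proof -
  have "Lb (gC k C i) - Lb (gC k C (i - 1)) \<noteq> {}"
    using Lb_diff_ne gC_P[OF assms(1)] gC_le[OF assms(1)] gC_ne[OF assms(1)] assms by simp
  thus "lb k C i \<in> Lb (gC k C i) - Lb (gC k C (i - 1))"
    unfolding lb_def using fin_Lb by (intro Min_in) auto
  show "\<And>m. m \<in> Lb (gC k C i) - Lb (gC k C (i - 1)) \<Longrightarrow> lb k C i \<le> m"
    unfolding lb_def using fin_Lb by (intro Min_le) auto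
qed

end
end


context GL
begin

context
  fixes k :: nat and T :: "nat set"
  assumes kt: "k < ht tp" and Tk: "T \<subseteq> {1..k}"
begin

lemma tgt_in: "tgt k T i \<in> insert (Suc k) T" "i < tgt k T i" if "i \<le> k"
proof -
  have "Suc k \<in> insert (Suc k) T \<and> i < Suc k" using that by simp
  hence "tgt k T i \<in> insert (Suc k) T \<and> i < tgt k T i"
    unfolding tgt_def by (rule LeastI)
  thus "tgt k T i \<in> insert (Suc k) T" "i < tgt k T i" by auto
qed

lemma tgt_min: "t \<in> insert (Suc k) T \<Longrightarrow> i < t \<Longrightarrow> tgt k T i \<le> t"
  unfolding tgt_def by (rule Least_le) simp

lemma tgt_le: "i \<le> k \<Longrightarrow> tgt k T i \<le> Suc k"
  using tgt_min[of "Suc k" i] by simp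

lemma tgt_gap: "i < j \<Longrightarrow> j < tgt k T i \<Longrightarrow> j \<notin> T"
  using tgt_min[of j i] by auto

lemma tgt_Suc: assumes "Suc i \<notin> T" "Suc i \<le> k" shows "tgt k T (Suc i) = tgt k T i"
proof -
  have "(\<lambda>t. t \<in> insert (Suc k) T \<and> Suc i < t) = (\<lambda>t. t \<in> insert (Suc k) T \<and> i < t)"
  proof (intro ext iffI)
    fix t assume "t \<in> insert (Suc k) T \<and> i < t"
    moreover hence "t \<noteq> Suc i" using assms by auto
    ultimately show "t \<in> insert (Suc k) T \<and> Suc i < t" by auto
  qed auto
  thus ?thesis unfolding tgt_def by (rule arg_cong[where f=Least])
qed

lemma tgt_eq: "Suc i \<in> T \<Longrightarrow> tgt k T i = Suc i"
  using tgt_min[of "Suc i" i] tgt_in[of i] Tk by force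

lemma key:
  assumes C: "C \<in> FC k" and DT: "Des k C \<subseteq> T" and ik: "i < k"
  shows "gC k C (Suc i) = stp (gC k C i) (gC k C (tgt k T i))"
proof -
  define t where "t = tgt k T i"
  have it: "i < t" and tk: "t \<le> Suc k" using tgt_in tgt_le ik unfolding t_def by auto
  define x where "x = gC k C i"
  define y where "y = gC k C t"
  have xP: "x \<in> P" and yP: "y \<in> P" unfolding x_def y_def using gC_P[OF kt C] by auto
  have xy: "le x y" unfolding x_def y_def using gC_le[OF kt C] it by simp
  have xny: "x \<noteq> y" unfolding x_def y_def using gC_ne[OF kt C] it ik by simp
  define m where "m = Min (Lb y - Lb x)"
  have ne: "Lb y - Lb x \<noteq> {}" using Lb_diff_ne xP yP xy xny by blast
  have mm: "m \<in> Lb y - Lb x" unfolding m_def using ne fin_Lb by (intro Min_in) auto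
  have l1: "lb k C (Suc i) \<in> Lb (gC k C (Suc i)) - Lb x"
    using lb_mem(1)[OF kt C, of "Suc i"] ik unfolding x_def by simp
  have "Lb (gC k C (Suc i)) \<subseteq> Lb y" unfolding y_def using gC_Lb[OF kt C] it by simp
  hence "lb k C (Suc i) \<in> Lb y - Lb x" using l1 by blast
  hence ge: "m \<le> lb k C (Suc i)" unfolding m_def using fin_Lb by (intro Min_le) auto
  define p where "p = (LEAST p. m \<in> Lb (gC k C p))"
  have mp: "m \<in> Lb (gC k C p)" unfolding p_def y_def
    by (rule LeastI[of _ t]) (use mm y_def in blast)
  have pt: "p \<le> t" unfolding p_def by (rule Least_le) (use mm y_def in blast)
  have ip: "i < p"
  proof (rule ccontr)
    assume "\<not> i < p"
    hence "Lb (gC k C p) \<subseteq> Lb x" unfolding x_def using gC_Lb[OF kt C] by simp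
    thus False using mp mm by blast
  qed
  have mp1: "m \<notin> Lb (gC k C (p - 1))"
  proof
    assume "m \<in> Lb (gC k C (p - 1))"
    hence "p \<le> p - 1" unfolding p_def by (rule Least_le)
    thus False using ip by simp
  qed
  have lp: "lb k C p \<le> m" using lb_mem(2)[OF kt C, of p m] mp mp1 ip pt tk by simp
  have "lb k C (Suc i) \<le> lb k C p"
  proof (rule mono_steps[where f="lb k C"])
    fix j assume j: "Suc i \<le> j" "j < p"
    hence "j \<notin> T" using tgt_gap[of i j] pt unfolding t_def by simp
    hence "j \<notin> Des k C" using DT by blast
    moreover have "j \<in> {1..k}" using j pt tk by simp
    ultimately show "lb k C j \<le> lb k C (Suc j)" unfolding Des_def by simp
  next
    show "Suc i \<le> p" using ip by simp
  qed
  hence lbm: "lb k C (Suc i) = m" using lp ge by simp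
  obtain a where a: "a \<in> At" "lab a = m" "le a (gC k C (Suc i))" "\<not> le a x"
    using Lb_mem[of m "gC k C (Suc i)" x] l1 lbm by blast
  have "stp x y = jn x a" unfolding stp_def m_def[symmetric] using a(2) atm_lab[OF a(1)] by simp
  moreover have "gC k C (Suc i) = jn x a"
  proof (rule jn_unique[OF xP gC_P[OF kt C] a(1) _ a(3,4)])
    show "le x (gC k C (Suc i))" unfolding x_def using gC_le[OF kt C] by simp
    show "ht (gC k C (Suc i)) = ht x + 1" unfolding x_def using gC_ht[OF kt C] ik by simp
  qed
  ultimately show ?thesis unfolding x_def y_def t_def by simp
qed

lemma gC_elt: "C \<in> FC k \<Longrightarrow> 1 \<le> i \<Longrightarrow> i \<le> k \<Longrightarrow> gC k C i = elt C i"
  unfolding gC_def by simp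

lemma FC_eq_img: assumes "C \<in> FC k" shows "C = gC k C ` {1..k}"
proof
  show "gC k C ` {1..k} \<subseteq> C" using gC_in[OF kt assms] by auto
  show "C \<subseteq> gC k C ` {1..k}"
  proof
    fix c assume c: "c \<in> C"
    hence "ht c \<in> {1..k}" using assms unfolding FC_def TC_def by blast
    moreover have "gC k C (ht c) = c" using TC_elt[of C "{1..k}" c] assms c calculation
      unfolding FC_def gC_def by auto
    ultimately show "c \<in> gC k C ` {1..k}" by (metis imageI)
  qed
qed

lemma uniq:
  assumes C1: "C1 \<in> FC k" and D1: "Des k C1 \<subseteq> T"
    and C2: "C2 \<in> FC k" and D2: "Des k C2 \<subseteq> T" and r: "res T C1 = res T C2"
  shows "C1 = C2"
proof -
  have "i \<le> k \<Longrightarrow> gC k C1 i = gC k C2 i" for i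
  proof (induction i)
    case 0 thus ?case unfolding gC_def by simp
  next
    case (Suc i)
    define t where "t = tgt k T i"
    have t: "t \<in> insert (Suc k) T" using tgt_in Suc.prems unfolding t_def by simp
    have "gC k C1 t = gC k C2 t"
    proof (cases "t = Suc k")
      case True thus ?thesis unfolding gC_def by simp
    next
      case False
      hence tT: "t \<in> T" using t by simp
      hence t1k: "1 \<le> t" "t \<le> k" using Tk by auto
      have e1: "elt C1 t \<in> C1" "ht (elt C1 t) = t"
        using TC_elt2[of C1 "{1..k}" t] C1 t1k unfolding FC_def by auto
      hence "elt C1 t \<in> res T C1" unfolding res_def using tT by simp
      hence "elt C1 t \<in> C2" using r unfolding res_def by simp
      hence "elt C2 t = elt C1 t" using TC_elt[of C2 "{1..k}" "elt C1 t"] C2 e1(2)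
        unfolding FC_def by simp
      thus ?thesis using t1k unfolding gC_def by simp
    qed
    moreover have "gC k C1 i = gC k C2 i" using Suc by simp
    ultimately show ?case using key[OF C1 D1] key[OF C2 D2] Suc.prems unfolding t_def by simp
  qed
  hence "gC k C1 ` {1..k} = gC k C2 ` {1..k}" by (intro image_cong) auto
  thus ?thesis using FC_eq_img C1 C2 by metis
qed

lemma exist:
  assumes D: "D \<in> TC T"
  shows "\<exists>C \<in> FC k. Des k C \<subseteq> T \<and> res T C = D"
proof -
  define tg where "tg i = (if tgt k T i \<le> k then elt D (tgt k T i) else tp)" for i
  have tgP: "tg i \<in> P" and tght: "i < ht (tg i)" if "i \<le> k" for i
  proof -
    have "tg i \<in> P \<and> i < ht (tg i)"
    proof (cases "tgt k T i \<le> k")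
      case True
      hence "tgt k T i \<in> T" using tgt_in[OF that] by auto
      hence "elt D (tgt k T i) \<in> D" "ht (elt D (tgt k T i)) = tgt k T i"
        using TC_elt2[OF D] by auto
      thus ?thesis using True TC_P[OF D] tgt_in[OF that] unfolding tg_def by auto
    next
      case False
      thus ?thesis using tp(1) kt that unfolding tg_def by auto
    qed
    thus "tg i \<in> P" "i < ht (tg i)" by auto
  qed
  define g where "g = rec_nat bo (\<lambda>i x. stp x (tg i))"
  have g0: "g 0 = bo" and gS: "\<And>i. g (Suc i) = stp (g i) (tg i)" unfolding g_def by simp_all
  have inv: "g i \<in> P \<and> ht (g i) = i \<and> le (g i) (tg i) \<and> (i \<in> T \<longrightarrow> g i = elt D i)"
    if "i \<le> k" for i
    using that
  proof (induction i)
    case 0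
    have "0 \<notin> T" using Tk by auto
    thus ?case using g0 bo ht_bo tgP[of 0] by simp
  next
    case (Suc i)
    hence ik: "i \<le> k" and IH: "g i \<in> P" "ht (g i) = i" "le (g i) (tg i)" by auto
    have yP: "tg i \<in> P" using tgP ik by blast
    have xy: "g i \<noteq> tg i" using tght[OF ik] IH(2) by auto
    note S = stp[OF IH(1) yP IH(3) xy]
    have SP: "g (Suc i) \<in> P" and Sh: "ht (g (Suc i)) = Suc i" and Sle: "le (g (Suc i)) (tg i)"
      using S IH unfolding gS by auto
    show ?case
    proof (cases "Suc i \<in> T")
      case False
      hence "tg (Suc i) = tg i" unfolding tg_def using tgt_Suc Suc.prems by simp
      thus ?thesis using SP Sh Sle False by simp
    next
      case True
      hence tt: "tgt k T i = Suc i" using tgt_eq by blast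
      hence tgi: "tg i = elt D (Suc i)" unfolding tg_def using Suc.prems by simp
      have eD: "elt D (Suc i) \<in> D" "ht (elt D (Suc i)) = Suc i" using TC_elt2[OF D True] by auto
      hence eq: "g (Suc i) = elt D (Suc i)" using heq[OF SP yP Sle] Sh tgi by simp
      have "le (elt D (Suc i)) (tg (Suc i))"
      proof (cases "tgt k T (Suc i) \<le> k")
        case True
        define t' where "t' = tgt k T (Suc i)"
        have "t' \<in> T" "Suc i < t'" using tgt_in[OF Suc.prems] True unfolding t'_def by auto
        hence "elt D t' \<in> D" "ht (elt D t') = t'" using TC_elt2[OF D] by auto
        hence "le (elt D (Suc i)) (elt D t')" using TC_le[OF D] eD \<open>Suc i < t'\<close> by simp
        thus ?thesis using True unfolding tg_def t'_def by simp
      next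
        case False
        thus ?thesis using tp(2) eD TC_P[OF D] unfolding tg_def by auto
      qed
      thus ?thesis using eq SP Sh by simp
    qed
  qed
  have gle: "le (g i) (g j)" if "i \<le> j" "j \<le> k" for i j
    using that
  proof (induction j)
    case 0 thus ?case using refl inv[of 0] by simp
  next
    case (Suc j)
    show ?case
    proof (cases "i = Suc j")
      case True thus ?thesis using refl inv[OF Suc.prems(2)] by simp
    next
      case False
      hence ij: "i \<le> j" "j \<le> k" using Suc.prems by auto
      hence a: "le (g i) (g j)" using Suc.IH by blast
      have jP: "g j \<in> P" "tg j \<in> P" "le (g j) (tg j)" "g j \<noteq> tg j"
        using inv[OF ij(2)] tgP[OF ij(2)] tght[OF ij(2)] by auto
      have b: "le (g j) (g (Suc j))" unfolding gS using stp(2)[OF jP] .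
      show ?thesis using trans[OF _ _ _ a b] inv ij Suc.prems by auto
    qed
  qed
  have gP: "\<And>i. i \<le> k \<Longrightarrow> g i \<in> P" and ght: "\<And>i. i \<le> k \<Longrightarrow> ht (g i) = i"
    and gT: "\<And>i. i \<le> k \<Longrightarrow> i \<in> T \<Longrightarrow> g i = elt D i" using inv by blast+
  define C where "C = g ` {1..k}"
  have ginj: "inj_on g {1..k}"
  proof (rule inj_onI)
    fix i j assume "i \<in> {1..k}" "j \<in> {1..k}" "g i = g j"
    moreover have "ht (g i) = i" "ht (g j) = j" using ght calculation(1,2) by auto
    ultimately show "i = j" by metis
  qed
  have htC: "ht ` C = {1..k}"
  proof -
    have "ht ` C = (ht \<circ> g) ` {1..k}" unfolding C_def by (simp add: image_comp)
    also have "\<dots> = id ` {1..k}" by (intro image_cong) (use ght in auto)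
    finally show ?thesis by simp
  qed
  have chC: "is_chain P le C"
    unfolding is_chain_def
  proof
    show "C \<subseteq> P" unfolding C_def using gP by auto
    show "\<forall>x\<in>C. \<forall>y\<in>C. le x y \<or> le y x"
    proof (intro ballI)
      fix x y assume "x \<in> C" "y \<in> C"
      then obtain i j where ij: "i \<in> {1..k}" "j \<in> {1..k}" "x = g i" "y = g j"
        unfolding C_def by blast
      show "le x y \<or> le y x"
      proof (cases "i \<le> j")
        case True thus ?thesis using gle[of i j] ij by auto
      next
        case False thus ?thesis using gle[of j i] ij by auto
      qed
    qed
  qed
  have CFC: "C \<in> FC k" unfolding FC_def TC_def using chC htC card_image[OF ginj] C_def by simp
  have gCg: "gC k C i = g i" if "i \<le> k" for i
  proof (cases "i = 0")
    case True thus ?thesis using g0 unfolding gC_def by simp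
  next
    case False
    hence "g i \<in> C" using that unfolding C_def by auto
    hence "elt C (ht (g i)) = g i" using TC_elt CFC unfolding FC_def by blast
    thus ?thesis using False that ght unfolding gC_def by simp
  qed
  have resC: "res T C = D"
  proof -
    have "res T C = g ` T" unfolding res_def C_def using ght Tk by force
    also have "\<dots> = elt D ` T" by (intro image_cong) (use gT Tk in auto)
    also have "\<dots> = D"
    proof
      show "elt D ` T \<subseteq> D" using TC_elt2[OF D] by auto
      show "D \<subseteq> elt D ` T"
      proof
        fix c assume "c \<in> D"
        moreover hence "ht c \<in> T" using D unfolding TC_def by blast
        ultimately show "c \<in> elt D ` T" using TC_elt[OF D] by (metis imageI)
      qed
    qed
    finally show ?thesis .
  qed
  have lbS: "lb k C (Suc j) = Min (Lb (tg j) - Lb (g j))" if "j \<le> k" for j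
  proof (cases "j < k")
    case True
    have jP: "g j \<in> P" "tg j \<in> P" "le (g j) (tg j)" "g j \<noteq> tg j"
      using gP[OF that] ght[OF that] inv[OF that] tgP[OF that] tght[OF that] by auto
    have "lb k C (Suc j) = Min (Lb (g (Suc j)) - Lb (g j))"
      unfolding lb_def using gCg that True by simp
    thus ?thesis unfolding gS using stp(5)[OF jP] by simp
  next
    case False
    hence jk: "j = k" using that by simp
    have "tgt k T k = Suc k" using tgt_in[of k] Tk by force
    hence "tg k = tp" unfolding tg_def by simp
    moreover have "gC k C (Suc k) = tp" unfolding gC_def by simp
    ultimately show ?thesis unfolding lb_def using gCg[of k] jk by simp
  qed
  have "Des k C \<subseteq> T"
  proof
    fix i assume iD: "i \<in> Des k C"
    show "i \<in> T"
    proof (rule ccontr)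
      assume nT: "i \<notin> T"
      obtain j where ij: "i = Suc j" "j < k" using iD unfolding Des_def
        by (metis Suc_le_eq atLeastAtMost_iff mem_Collect_eq not0_implies_Suc not_one_le_zero)
      have tgeq: "tg i = tg j" unfolding tg_def using tgt_Suc[of j] nT ij by simp
      have iP: "g i \<in> P" "tg i \<in> P" "le (g i) (tg i)" "g i \<noteq> tg i"
        using gP[of i] ght[of i] inv[of i] tgP[of i] tght[of i] ij by auto
      have ne: "Lb (tg i) - Lb (g i) \<noteq> {}" using Lb_diff_ne iP by blast
      have sub: "Lb (g j) \<subseteq> Lb (g i)" using Lb_mono[OF gP gP gle[of j i]] ij by auto
      have "Min (Lb (tg j) - Lb (g j)) \<le> Min (Lb (tg i) - Lb (g i))"
        using ne sub tgeq fin_Lb by (intro Min_antimono) auto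
      hence "lb k C i \<le> lb k C (Suc i)" using lbS[of j] lbS[of i] ij by simp
      thus False using iD unfolding Des_def by simp
    qed
  qed
  thus ?thesis using CFC resC by blast
qed

end
end


context GL
begin

lemma res_TC:
  assumes C: "C \<in> FC k" and Tk: "T \<subseteq> {1..k}"
  shows "res T C \<in> TC T"
proof -
  have CT: "C \<in> TC {1..k}" using C unfolding FC_def .
  have ch: "is_chain P le (res T C)" using CT unfolding TC_def is_chain_def res_def by blast
  have im: "ht ` res T C = T"
  proof
    show "ht ` res T C \<subseteq> T" unfolding res_def by auto
    show "T \<subseteq> ht ` res T C"
    proof
      fix t assume "t \<in> T"
      hence "t \<in> ht ` C" using Tk CT unfolding TC_def by auto
      then obtain c where "c \<in> C" "ht c = t" by blast
      thus "t \<in> ht ` res T C" using \<open>t \<in> T\<close> unfolding res_def by force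
    qed
  qed
  have "inj_on ht (res T C)" using TC_inj[OF CT] unfolding res_def by (rule inj_on_subset) auto
  hence "card (res T C) = card T" using im card_image by metis
  thus ?thesis using ch im unfolding TC_def by simp
qed

lemma count_T:
  assumes kt: "k < ht tp" and Tk: "T \<subseteq> {1..k}"
  shows "card (TC T) = card {C \<in> FC k. Des k C \<subseteq> T}"
proof -
  have "bij_betw (res T) {C \<in> FC k. Des k C \<subseteq> T} (TC T)"
    unfolding bij_betw_def
  proof
    show "inj_on (res T) {C \<in> FC k. Des k C \<subseteq> T}"
      by (rule inj_onI) (use uniq[OF kt Tk] in blast)
    show "res T ` {C \<in> FC k. Des k C \<subseteq> T} = TC T"
    proof
      show "res T ` {C \<in> FC k. Des k C \<subseteq> T} \<subseteq> TC T" using res_TC Tk by blast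
      show "TC T \<subseteq> res T ` {C \<in> FC k. Des k C \<subseteq> T}"
      proof
        fix D assume "D \<in> TC T"
        then obtain C where "C \<in> FC k" "Des k C \<subseteq> T" "res T C = D"
          using exist[OF kt Tk] by blast
        thus "D \<in> res T ` {C \<in> FC k. Des k C \<subseteq> T}" by blast
      qed
    qed
  qed
  thus ?thesis by (metis bij_betw_same_card)
qed

lemma Des_sub: "Des k C \<subseteq> {1..k}" unfolding Des_def by blast

lemma flag_h_count:
  assumes kt: "k < ht tp" and Sk: "S \<subseteq> {1..k}"
  shows "flag_h P le S = int (card {C \<in> FC k. Des k C = S})"
proof -
  define f where "f U = int (card {C \<in> FC k. Des k C = U})" for U
  define g where "g U = int (card {C \<in> FC k. Des k C \<subseteq> U})" for U
  have gf: "g U = sum f (Pow U)" if "finite U" for U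
  proof -
    have "{C \<in> FC k. Des k C \<subseteq> U} = (\<Union>V\<in>Pow U. {C \<in> FC k. Des k C = V})" by blast
    hence "card {C \<in> FC k. Des k C \<subseteq> U} = (\<Sum>V\<in>Pow U. card {C \<in> FC k. Des k C = V})"
      by (simp, intro card_UN_disjoint) (use that FC_fin[of k] in auto)
    thus ?thesis unfolding f_def g_def by simp
  qed
  have fS: "f S = (\<Sum>T \<in> Pow S. (-1) ^ (card S - card T) * g T)"
    by (rule inclusion_exclusion_mobius) (use gf Sk finite_subset in auto)
  have "flag_h P le S = (\<Sum>T \<in> Pow S. (-1) ^ (card S - card T) * g T)"
    unfolding flag_h_def
  proof (rule sum.cong[OF HOL.refl])
    fix T assume "T \<in> Pow S"
    hence "T \<subseteq> {1..k}" using Sk by blast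
    hence "flag_f P le T = card {C \<in> FC k. Des k C \<subseteq> T}"
      using flag_f_TC count_T[OF kt] by simp
    thus "(-1) ^ (card S - card T) * int (flag_f P le T) = (-1) ^ (card S - card T) * g T"
      unfolding g_def by simp
  qed
  thus ?thesis using fS unfolding f_def by simp
qed

lemma lb_E: "k < ht tp \<Longrightarrow> C \<in> FC k \<Longrightarrow> 1 \<le> i \<Longrightarrow> i \<le> Suc k \<Longrightarrow> lb k C i \<in> E"
  using lb_mem(1) Lb_E by blast

lemma lb_distinct:
  assumes kt: "k < ht tp" and C: "C \<in> FC k" and ij: "1 \<le> i" "i < j" "j \<le> Suc k"
  shows "lb k C i \<noteq> lb k C j"
proof -
  have "lb k C i \<in> Lb (gC k C i)" using lb_mem(1)[OF kt C, of i] ij by auto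
  moreover have "i \<le> j - 1" using ij by simp
  ultimately have "lb k C i \<in> Lb (gC k C (j - 1))" using gC_Lb[OF kt C, of i "j - 1"] by blast
  moreover have "lb k C j \<notin> Lb (gC k C (j - 1))" using lb_mem(1)[OF kt C, of j] ij by auto
  ultimately show ?thesis by metis
qed

lemma gC_jn:
  assumes kt: "k < ht tp" and C: "C \<in> FC k" and ik: "i < k"
  shows "gC k C (Suc i) = jn (gC k C i) (atm (lb k C (Suc i)))"
proof -
  have "lb k C (Suc i) \<in> Lb (gC k C (Suc i)) - Lb (gC k C i)"
    using lb_mem(1)[OF kt C, of "Suc i"] ik by simp
  then obtain a where a: "a \<in> At" "lab a = lb k C (Suc i)" "le a (gC k C (Suc i))"
      "\<not> le a (gC k C i)" using Lb_mem by blast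
  have "gC k C (Suc i) = jn (gC k C i) a"
    using jn_unique[OF gC_P[OF kt C] gC_P[OF kt C] a(1) gC_le[OF kt C] a(3,4)]
      gC_ht[OF kt C] ik by simp
  thus ?thesis using atm_lab[OF a(1)] a(2) by simp
qed

lemma lb_inj:
  assumes kt: "k < ht tp" and C1: "C1 \<in> FC k" and C2: "C2 \<in> FC k"
    and eq: "\<And>i. 1 \<le> i \<Longrightarrow> i \<le> k \<Longrightarrow> lb k C1 i = lb k C2 i"
  shows "C1 = C2"
proof -
  have "i \<le> k \<Longrightarrow> gC k C1 i = gC k C2 i" for i
  proof (induction i)
    case 0 thus ?case unfolding gC_def by simp
  next
    case (Suc i)
    thus ?case using gC_jn[OF kt C1, of i] gC_jn[OF kt C2, of i] eq[of "Suc i"] by simp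
  qed
  hence "gC k C1 ` {1..k} = gC k C2 ` {1..k}" by (intro image_cong) auto
  thus ?thesis using FC_eq_img[OF kt, of "{}"] C1 C2 by (metis empty_subsetI)
qed

lemma FC_ne:
  assumes kt: "k < ht tp" shows "\<exists>C. C \<in> FC k"
proof -
  have "{} \<in> TC {}" unfolding TC_def is_chain_def by simp
  thus ?thesis using exist[OF kt, of "{}" "{}"] by blast
qed

lemma card_E:
  assumes kt: "k < ht tp" shows "Suc k \<le> card E"
proof -
  obtain C where C: "C \<in> FC k" using FC_ne[OF kt] by blast
  have "inj_on (lb k C) {1..Suc k}"
  proof (rule inj_onI)
    fix i j assume "i \<in> {1..Suc k}" "j \<in> {1..Suc k}" "lb k C i = lb k C j"
    thus "i = j" using lb_distinct[OF kt C, of i j] lb_distinct[OF kt C, of j i]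
      by (metis atLeastAtMost_iff linorder_neqE_nat)
  qed
  moreover have "lb k C ` {1..Suc k} \<subseteq> E" using lb_E[OF kt C] by auto
  ultimately show ?thesis using card_inj_on_le[OF _ _ fin_E] by fastforce
qed

end


lemma flag_h_empty: "flag_h P le {} = 1"
proof -
  have "{C. is_chain P le C \<and> card C = card {} \<and> height P le ` C = {}} = {{}}"
    unfolding is_chain_def by auto
  thus ?thesis unfolding flag_h_def flag_f_def by simp
qed

lemma geo_GL:
  assumes g: "geometric_lattice P le" and inj: "inj_on lab (atoms P le)"
  shows "GL P le lab"
proof -
  have gp: "graded_poset P le" and lat: "is_lattice P le" and at: "atomic P le"
    and sm: "\<forall>x\<in>P. \<forall>y\<in>P. \<forall>j m. is_lub P le {x, y} j \<and> is_glb P le {x, y} m \<longrightarrow>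
        height P le j + height P le m \<le> height P le x + height P le y"
    using g unfolding geometric_lattice_def by blast+
  have fin: "finite P" and po: "partial_order_on' P le"
    and hb: "\<exists>b\<in>P. \<forall>x\<in>P. le b x" and ht: "\<exists>t\<in>P. \<forall>x\<in>P. le x t"
    using gp unfolding graded_poset_def by blast+
  have anti: "\<And>x y. x \<in> P \<Longrightarrow> y \<in> P \<Longrightarrow> le x y \<Longrightarrow> le y x \<Longrightarrow> x = y"
    using po unfolding partial_order_on'_def by blast
  show ?thesis
  proof (unfold_locales)
    show "finite P" "partial_order_on' P le" "\<exists>b\<in>P. \<forall>x\<in>P. le b x" "\<exists>t\<in>P. \<forall>x\<in>P. le x t"
      "inj_on lab (atoms P le)" by fact+
  next
    fix x y assume xy: "x \<in> P" "y \<in> P" "le x y" "x \<noteq> y"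
    show "\<exists>a\<in>atoms P le. le a y \<and> \<not> le a x"
    proof (rule ccontr)
      assume "\<not> (\<exists>a\<in>atoms P le. le a y \<and> \<not> le a x)"
      hence "\<forall>a\<in>{a \<in> atoms P le. le a y}. le a x" by blast
      moreover have "is_lub P le {a \<in> atoms P le. le a y} y" using at xy(2) unfolding atomic_def by blast
      ultimately have "le y x" using xy(1) unfolding is_lub_def by blast
      thus False using anti xy by blast
    qed
  next
    fix x a assume xa: "x \<in> P" "a \<in> atoms P le" "\<not> le a x"
    have aP: "a \<in> P" and ha: "height P le a = 1" using xa(2) unfolding atoms_def by auto
    obtain j m where jm: "is_lub P le {x, a} j" "is_glb P le {x, a} m"
      using lat xa(1) aP unfolding is_lattice_def by blast
    hence "height P le j + height P le m \<le> height P le x + height P le a"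
      using sm xa(1) aP by blast
    hence "height P le j \<le> height P le x + 1" using ha by simp
    thus "\<exists>j. is_lub P le {x, a} j \<and> height P le j \<le> height P le x + 1" using jm by blast
  qed
qed

context GL
begin

lemma rank_tp: "poset_rank P le = ht tp"
  unfolding poset_rank_def
proof (rule Max_eqI)
  show "finite (ht ` P)" using fin by simp
  show "\<And>y. y \<in> ht ` P \<Longrightarrow> y \<le> ht tp" using ht_tp by blast
  show "ht tp \<in> ht ` P" using tp(1) by simp
qed

end



lemma ht_upper:
  fixes phi :: "'a \<Rightarrow> nat"
  assumes fin: "finite P" and po: "partial_order_on' P le" and x: "x \<in> P"
    and sm: "\<And>u v. u \<in> P \<Longrightarrow> v \<in> P \<Longrightarrow> le u v \<Longrightarrow> u \<noteq> v \<Longrightarrow> phi u < phi v"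
  shows "height P le x \<le> phi x"
proof -
  have "card C \<le> phi x + 1" if C: "is_chain P le C" "\<forall>c\<in>C. le c x" for C
  proof -
    have CP: "C \<subseteq> P" using C(1) chain_sub by blast
    have "inj_on phi C"
    proof (rule inj_onI)
      fix c d assume cd: "c \<in> C" "d \<in> C" "phi c = phi d"
      show "c = d"
      proof (rule ccontr)
        assume "c \<noteq> d"
        moreover have "le c d \<or> le d c" using C(1) cd unfolding is_chain_def by blast
        moreover have "c \<in> P" "d \<in> P" using cd CP by auto
        ultimately have "phi c < phi d \<or> phi d < phi c" using sm[of c d] sm[of d c] by metis
        thus False using cd(3) by simp
      qed
    qed
    moreover have "phi ` C \<subseteq> {..phi x}"
    proof
      fix u assume "u \<in> phi ` C"
      then obtain c where c: "c \<in> C" "u = phi c" by blast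
      have cP: "c \<in> P" using c CP by auto
      have "phi c \<le> phi x"
      proof (cases "c = x")
        case False thus ?thesis using sm[OF cP x] C(2) c(1) by fastforce
      qed simp
      thus "u \<in> {..phi x}" using c by simp
    qed
    ultimately have "card C \<le> card {..phi x}" by (metis card_inj_on_le finite_atMost)
    thus ?thesis by simp
  qed
  hence all: "\<forall>m\<in>{card C |C. is_chain P le C \<and> (\<forall>c\<in>C. le c x)}. m \<le> phi x + 1"
    by (smt (verit) mem_Collect_eq)
  have ne: "{card C |C. is_chain P le C \<and> (\<forall>c\<in>C. le c x)} \<noteq> {}"
    using ht_set_ne[of P le x] by (rule ne_of_mem)
  have "Max {card C |C. is_chain P le C \<and> (\<forall>c\<in>C. le c x)} \<le> phi x + 1"
    using all ne ht_set_fin[OF fin, of le x] by (simp add: Max_le_iff)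
  thus ?thesis unfolding height_def by simp
qed

context
  fixes r n :: nat
  assumes r1: "1 \<le> r" and rn: "r + 1 \<le> n"
begin

abbreviation "Bc \<equiv> trunc_bool_carrier r n"
abbreviation "Bl \<equiv> trunc_bool_le"
abbreviation "hB \<equiv> height Bc Bl"

lemma Bc_Some: "Some X \<in> Bc \<longleftrightarrow> X \<subseteq> {1..n} \<and> card X \<le> r"
  unfolding trunc_bool_carrier_def by auto

lemma Bc_None: "None \<in> Bc"
  unfolding trunc_bool_carrier_def by auto

lemma Bl_simps: "Bl x None" "Bl None (Some Y) = False" "Bl (Some X) (Some Y) = (X \<subseteq> Y)"
  unfolding trunc_bool_le_def by (auto split: option.splits)

lemma Bc_fin: "finite Bc"
proof -
  have "Bc \<subseteq> insert None (Some ` Pow {1..n})" unfolding trunc_bool_carrier_def by auto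
  thus ?thesis by (rule finite_subset) simp
qed

lemma Bc_po: "partial_order_on' Bc Bl"
  unfolding partial_order_on'_def trunc_bool_le_def by (auto split: option.splits)

lemma Bc_fin_set: "Some X \<in> Bc \<Longrightarrow> finite X"
  using Bc_Some finite_subset by blast

definition phiB :: "nat set option \<Rightarrow> nat" where "phiB x = (case x of None \<Rightarrow> r + 1 | Some X \<Rightarrow> card X)"

lemma phiB_sm: "u \<in> Bc \<Longrightarrow> v \<in> Bc \<Longrightarrow> Bl u v \<Longrightarrow> u \<noteq> v \<Longrightarrow> phiB u < phiB v"
proof (cases u; cases v)
  fix X Y assume "u \<in> Bc" "v \<in> Bc" "Bl u v" "u \<noteq> v" "u = Some X" "v = Some Y"
  thus "phiB u < phiB v" unfolding phiB_def using Bl_simps Bc_fin_set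
    by (simp add: psubset_card_mono psubset_eq)
next
  fix X assume "u \<in> Bc" "u = Some X" "v = None"
  thus "phiB u < phiB v" unfolding phiB_def using Bc_Some by simp
qed (auto simp: Bl_simps)

lemma hB_Some_le: assumes "Some X \<in> Bc" shows "hB (Some X) \<le> card X"
proof -
  have "hB (Some X) \<le> phiB (Some X)"
    by (rule ht_upper[where phi=phiB, OF Bc_fin Bc_po assms]) (rule phiB_sm)
  thus ?thesis unfolding phiB_def by simp
qed

lemma hB_None_le: "hB None \<le> r + 1"
proof -
  have "hB None \<le> phiB None"
    by (rule ht_upper[where phi=phiB, OF Bc_fin Bc_po Bc_None]) (rule phiB_sm)
  thus ?thesis unfolding phiB_def by simp
qed

lemma hB_Some_ge: "Some X \<in> Bc \<Longrightarrow> card X \<le> hB (Some X)"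
proof (induction "card X" arbitrary: X)
  case 0 thus ?case by simp
next
  case (Suc m)
  then obtain x where x: "x \<in> X" by (metis card.empty ex_in_conv nat.distinct(1))
  have fX: "finite X" using Suc.prems Bc_fin_set by blast
  have sub: "Some (X - {x}) \<in> Bc" using Suc.prems Bc_Some card_Diff1_le[of X x] fX by auto
  have cm: "card (X - {x}) = m" using Suc.hyps(2) x fX by simp
  have "hB (Some (X - {x})) < hB (Some X)"
    by (rule ht_lt[OF Bc_fin Bc_po sub Suc.prems]) (use x in \<open>auto simp: Bl_simps\<close>)
  thus ?case using Suc.hyps(1)[OF cm[symmetric] sub] cm Suc.hyps(2) by simp
qed

lemma hB_Some: "Some X \<in> Bc \<Longrightarrow> hB (Some X) = card X"
  using hB_Some_le hB_Some_ge by (simp add: order.antisym)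

lemma hB_None: "hB None = r + 1"
proof -
  have s: "Some {1..r} \<in> Bc" using Bc_Some rn by simp
  have "hB (Some {1..r}) < hB None"
    by (rule ht_lt[OF Bc_fin Bc_po s Bc_None]) (auto simp: Bl_simps)
  thus ?thesis using hB_Some[OF s] hB_None_le by simp
qed

lemma atoms_B: "atoms Bc Bl = (\<lambda>j. Some {j}) ` {1..n}"
proof
  show "atoms Bc Bl \<subseteq> (\<lambda>j. Some {j}) ` {1..n}"
  proof
    fix a assume a: "a \<in> atoms Bc Bl"
    hence aB: "a \<in> Bc" and h: "hB a = 1" unfolding atoms_def by auto
    show "a \<in> (\<lambda>j. Some {j}) ` {1..n}"
    proof (cases a)
      case None thus ?thesis using h hB_None r1 by simp
    next
      case (Some X)
      hence "card X = 1" using h hB_Some aB by simp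
      then obtain j where "X = {j}" using card_1_singletonE by blast
      thus ?thesis using Some aB Bc_Some by auto
    qed
  qed
  show "(\<lambda>j. Some {j}) ` {1..n} \<subseteq> atoms Bc Bl"
  proof
    fix a assume "a \<in> (\<lambda>j. Some {j}) ` {1..n}"
    then obtain j where j: "j \<in> {1..n}" "a = Some {j}" by blast
    hence "a \<in> Bc" using Bc_Some r1 by simp
    thus "a \<in> atoms Bc Bl" unfolding atoms_def using hB_Some j by simp
  qed
qed

definition labB :: "nat set option \<Rightarrow> nat" where "labB x = (case x of None \<Rightarrow> 0 | Some X \<Rightarrow> Min X)"

lemma GL_B: "GL Bc Bl labB"
proof (unfold_locales)
  show "finite Bc" by (rule Bc_fin)
  show "partial_order_on' Bc Bl" by (rule Bc_po)
  show "\<exists>b\<in>Bc. \<forall>x\<in>Bc. Bl b x"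
    by (rule bexI[of _ "Some {}"]) (auto simp: Bc_Some trunc_bool_le_def split: option.splits)
  show "\<exists>t\<in>Bc. \<forall>x\<in>Bc. Bl x t" using Bc_None Bl_simps by blast
  show "inj_on labB (atoms Bc Bl)" unfolding atoms_B labB_def by (rule inj_onI) auto
next
  fix x y assume xy: "x \<in> Bc" "y \<in> Bc" "Bl x y" "x \<noteq> y"
  then obtain X where X: "x = Some X" by (cases x; cases y) (auto simp: Bl_simps)
  show "\<exists>a\<in>atoms Bc Bl. Bl a y \<and> \<not> Bl a x"
  proof (cases y)
    case None
    have cX: "card X \<le> r" "X \<subseteq> {1..n}" using xy(1) X Bc_Some by auto
    have "\<not> {1..n} \<subseteq> X"
    proof
      assume "{1..n} \<subseteq> X"
      moreover have "finite X" using cX(2) finite_subset by blast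
      ultimately have "card {1..n} \<le> card X" using card_mono by blast
      thus False using cX(1) rn by simp
    qed
    then obtain j where "j \<in> {1..n}" "j \<notin> X" by blast
    thus ?thesis using None X atoms_B Bl_simps by auto
  next
    case (Some Y)
    hence "X \<subseteq> Y" "X \<noteq> Y" using xy X Bl_simps by auto
    then obtain j where j: "j \<in> Y" "j \<notin> X" by blast
    have "Y \<subseteq> {1..n}" using xy Some Bc_Some by auto
    thus ?thesis using j Some X atoms_B Bl_simps by auto
  qed
next
  fix x a assume xa: "x \<in> Bc" "a \<in> atoms Bc Bl" "\<not> Bl a x"
  then obtain j where j: "j \<in> {1..n}" "a = Some {j}" using atoms_B by auto
  obtain X where X: "x = Some X" using xa by (cases x) (auto simp: Bl_simps)
  have jX: "j \<notin> X" using xa j X Bl_simps by auto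
  have Xs: "X \<subseteq> {1..n}" "card X \<le> r" using xa X Bc_Some by auto
  have fX: "finite X" using Xs finite_subset by blast
  show "\<exists>u. is_lub Bc Bl {x, a} u \<and> hB u \<le> hB x + 1"
  proof (cases "card X < r")
    case True
    have uB: "Some (insert j X) \<in> Bc" using Xs j True fX jX Bc_Some by simp
    have "is_lub Bc Bl {x, a} (Some (insert j X))"
      unfolding is_lub_def using uB X j
      by (auto simp: trunc_bool_le_def split: option.splits)
    moreover have "hB (Some (insert j X)) = hB x + 1" using hB_Some uB xa X fX jX by simp
    ultimately show ?thesis by auto
  next
    case False
    hence cX: "card X = r" using Xs by simp
    have "is_lub Bc Bl {x, a} None"
      unfolding is_lub_def
    proof (intro conjI ballI impI)
      show "None \<in> Bc" by (rule Bc_None)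
      show "\<And>u. u \<in> {x, a} \<Longrightarrow> Bl u None" using Bl_simps by simp
      fix y assume y: "y \<in> Bc" "\<forall>u\<in>{x, a}. Bl u y"
      show "Bl None y"
      proof (cases y)
        case (Some Y)
        hence "insert j X \<subseteq> Y" "Y \<subseteq> {1..n}" "card Y \<le> r" using y X j Bl_simps Bc_Some by auto
        hence "card (insert j X) \<le> r" by (meson card_mono finite_atLeastAtMost finite_subset le_trans)
        thus ?thesis using cX fX jX by simp
      qed (simp add: Bl_simps)
    qed
    moreover have "hB None = hB x + 1" using hB_None hB_Some xa X cX by simp
    ultimately show ?thesis by auto
  qed
qed

end


context
  fixes r n :: nat
  assumes r1: "1 \<le> r" and rn: "r + 1 \<le> n"
begin

lemmas BcS = Bc_Some[OF r1 rn]
lemmas BcN = Bc_None[OF r1 rn]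
lemmas Bls = Bl_simps[OF r1 rn]
lemmas hBS = hB_Some[OF r1 rn]
lemmas atB = atoms_B[OF r1 rn]

lemma B_facts:
  "GL.bo (trunc_bool_carrier r n) trunc_bool_le = Some {}"
  "GL.tp (trunc_bool_carrier r n) trunc_bool_le = None"
  "X \<subseteq> {1..n} \<Longrightarrow> GL.Lb (trunc_bool_carrier r n) trunc_bool_le labB (Some X) = X"
  "GL.Lb (trunc_bool_carrier r n) trunc_bool_le labB None = {1..n}"
proof -
  interpret B: GL "trunc_bool_carrier r n" trunc_bool_le labB by (rule GL_B[OF r1 rn])
  have s0: "Some {} \<in> trunc_bool_carrier r n" using BcS by simp
  have "trunc_bool_le B.bo (Some {})" using B.bo(2)[OF s0] .
  thus "B.bo = Some {}" by (cases B.bo) (auto simp: Bls)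
  have "trunc_bool_le None B.tp" using B.tp(2)[OF BcN] .
  thus "B.tp = None" by (cases B.tp) (auto simp: Bls)
  have lbs: "labB (Some {j}) = j" for j unfolding labB_def[OF r1 rn] by simp
  show "B.Lb (Some X) = X" if X: "X \<subseteq> {1..n}"
  proof -
    have "{a \<in> atoms (trunc_bool_carrier r n) trunc_bool_le. trunc_bool_le a (Some X)}
        = (\<lambda>j. Some {j}) ` X"
      using X unfolding atB by (auto simp: Bls)
    thus ?thesis unfolding B.Lb_def using lbs by (simp add: image_comp)
  qed
  show "B.Lb None = {1..n}"
  proof -
    have "{a \<in> atoms (trunc_bool_carrier r n) trunc_bool_le. trunc_bool_le a None}
        = (\<lambda>j. Some {j}) ` {1..n}"
      unfolding atB by (auto simp: Bls)
    thus ?thesis unfolding B.Lb_def using lbs by (simp add: image_comp)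
  qed
qed

lemma B_chain:
  assumes k: "1 \<le> k" "k \<le> r" and s: "inj_on s {1..k}" "s ` {1..k} \<subseteq> {1..n}"
  defines "C' \<equiv> (\<lambda>i. Some (s ` {1..i})) ` {1..k}"
  shows "C' \<in> GL.FC (trunc_bool_carrier r n) trunc_bool_le k"
    "\<And>i. 1 \<le> i \<Longrightarrow> i \<le> k \<Longrightarrow> GL.lb (trunc_bool_carrier r n) trunc_bool_le labB k C' i = s i"
    "GL.lb (trunc_bool_carrier r n) trunc_bool_le labB k C' (Suc k) = Min ({1..n} - s ` {1..k})"
proof -
  interpret B: GL "trunc_bool_carrier r n" trunc_bool_le labB by (rule GL_B[OF r1 rn])
  define c where "c i = Some (s ` {1..i})" for i
  have sub: "s ` {1..i} \<subseteq> {1..n}" if "i \<le> k" for i using s(2) that by auto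
  have card: "card (s ` {1..i}) = i" if "i \<le> k" for i
    using card_image[OF inj_on_subset[OF s(1)]] that by auto
  have cB: "c i \<in> trunc_bool_carrier r n" if "i \<le> k" for i
    unfolding c_def using BcS sub[OF that] card[OF that] that k by simp
  have ch: "B.ht (c i) = i" if "i \<le> k" for i
    unfolding c_def using hBS cB[OF that] card[OF that] unfolding c_def by simp
  have cle: "trunc_bool_le (c i) (c j)" if "i \<le> j" for i j
    unfolding c_def using that by (auto simp: Bls)
  have C'c: "C' = c ` {1..k}" unfolding C'_def c_def by simp
  have inj: "inj_on c {1..k}"
  proof (rule inj_onI)
    fix i j assume "i \<in> {1..k}" "j \<in> {1..k}" "c i = c j"
    thus "i = j" using ch[of i] ch[of j] by (metis atLeastAtMost_iff)
  qed
  have hC: "B.ht ` C' = {1..k}"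
  proof -
    have "B.ht ` C' = (B.ht \<circ> c) ` {1..k}" unfolding C'c by (simp add: image_comp)
    also have "\<dots> = id ` {1..k}" by (intro image_cong) (use ch in auto)
    finally show ?thesis by simp
  qed
  have chain: "is_chain (trunc_bool_carrier r n) trunc_bool_le C'"
    unfolding is_chain_def
  proof
    show "C' \<subseteq> trunc_bool_carrier r n" unfolding C'c using cB by auto
    show "\<forall>x\<in>C'. \<forall>y\<in>C'. trunc_bool_le x y \<or> trunc_bool_le y x"
    proof (intro ballI)
      fix x y assume "x \<in> C'" "y \<in> C'"
      then obtain i j where ij: "x = c i" "y = c j" unfolding C'c by blast
      show "trunc_bool_le x y \<or> trunc_bool_le y x"
        using cle[of i j] cle[of j i] ij by (cases "i \<le> j") auto
    qed
  qed
  show FC: "C' \<in> B.FC k" unfolding B.FC_def B.TC_def using chain hC card_image[OF inj] C'c by simp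
  have gC: "B.gC k C' i = c i" if "i \<le> k" for i
  proof (cases "i = 0")
    case True thus ?thesis unfolding B.gC_def c_def using B_facts(1) by simp
  next
    case False
    hence "c i \<in> C'" using that unfolding C'c by auto
    hence "B.elt C' (B.ht (c i)) = c i" using B.TC_elt FC unfolding B.FC_def by blast
    thus ?thesis using False that ch unfolding B.gC_def by simp
  qed
  show "B.lb k C' i = s i" if i: "1 \<le> i" "i \<le> k" for i
  proof -
    have "{1..i} = insert i {1..i - 1}" using atLeastAtMostSuc_conv[of 1 "i - 1"] i by simp
    moreover have "s i \<notin> s ` {1..i - 1}"
    proof
      assume "s i \<in> s ` {1..i - 1}"
      then obtain j where j: "j \<in> {1..i - 1}" "s i = s j" by blast
      hence "i = j" using inj_onD[OF s(1) j(2)] i by auto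
      thus False using j i by simp
    qed
    ultimately have "s ` {1..i} - s ` {1..i - 1} = {s i}" by auto
    moreover have "B.lb k C' i = Min (s ` {1..i} - s ` {1..i - 1})"
      unfolding B.lb_def using gC[of i] gC[of "i - 1"] i B_facts(3) sub unfolding c_def by simp
    ultimately show ?thesis by simp
  qed
  show "B.lb k C' (Suc k) = Min ({1..n} - s ` {1..k})"
  proof -
    have "B.gC k C' (Suc k) = None" unfolding B.gC_def using B_facts(2) by simp
    thus ?thesis unfolding B.lb_def using gC[of k] B_facts(3,4) sub unfolding c_def by simp
  qed
qed

end



theorem proposition3p2:
  fixes L :: "'a set" and le :: "'a \<Rightarrow> 'a \<Rightarrow> bool" and r n :: nat and S :: "nat set"
  assumes "geometric_lattice L le"
    and "poset_rank L le = r + 1"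
    and "card (atoms L le) = n"
    and "S \<subseteq> {1..r}"
  shows "flag_h L le S \<le> flag_h (trunc_bool_carrier r n) trunc_bool_le S"
proof (cases "S = {}")
  case True thus ?thesis using flag_h_empty[of L le] flag_h_empty[of "trunc_bool_carrier r n" trunc_bool_le] by simp
next
  case False
  note geo = assms(1) and rk = assms(2) and cn = assms(3) and Sr = assms(4)
  have finS: "finite S" using Sr finite_subset by blast
  define k where "k = Max S"
  have kS: "k \<in> S" unfolding k_def using finS False by (rule Max_in)
  have Sk: "S \<subseteq> {1..k}" using Sr Max_ge[OF finS] unfolding k_def by auto
  have k1: "1 \<le> k" and kr: "k \<le> r" using kS Sr by auto
  have r1: "1 \<le> r" using k1 kr by simp
  have finA: "finite (atoms L le)"
  proof -
    have "finite L" using geo unfolding geometric_lattice_def graded_poset_def by blast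
    moreover have "atoms L le \<subseteq> L" unfolding atoms_def by blast
    ultimately show ?thesis using finite_subset by blast
  qed
  obtain lab where bij: "bij_betw lab (atoms L le) {1..n}"
    using finite_same_card_bij[OF finA, of "{1..n}"] cn by auto
  interpret L: GL L le lab using geo_GL[OF geo bij_betw_imp_inj_on[OF bij]] .
  have EL: "L.E = {1..n}" unfolding L.E_def using bij bij_betw_imp_surj_on by blast
  have htL: "L.ht L.tp = r + 1" using L.rank_tp rk by simp
  have ktL: "k < L.ht L.tp" using htL kr by simp
  have rn: "r + 1 \<le> n" using L.card_E[of r] htL EL by simp
  interpret B: GL "trunc_bool_carrier r n" trunc_bool_le labB by (rule GL_B[OF r1 rn])
  have htB: "B.ht B.tp = r + 1" using B_facts(2)[OF r1 rn] hB_None[OF r1 rn] by simp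
  have ktB: "k < B.ht B.tp" using htB kr by simp
  define XL where "XL = {C \<in> L.FC k. L.Des k C = S}"
  define XB where "XB = {C \<in> B.FC k. B.Des k C = S}"
  have hL: "flag_h L le S = int (card XL)" unfolding XL_def by (rule L.flag_h_count[OF ktL Sk])
  have hB: "flag_h (trunc_bool_carrier r n) trunc_bool_le S = int (card XB)"
    unfolding XB_def by (rule B.flag_h_count[OF ktB Sk])
  define LamL where "LamL C = (\<lambda>i. if i \<in> {1..k} then L.lb k C i else 0)" for C
  define LamB where "LamB C = (\<lambda>i. if i \<in> {1..k} then B.lb k C i else 0)" for C
  have injL: "inj_on LamL XL"
  proof (rule inj_onI)
    fix C1 C2 assume C: "C1 \<in> XL" "C2 \<in> XL" "LamL C1 = LamL C2"
    have "\<And>i. 1 \<le> i \<Longrightarrow> i \<le> k \<Longrightarrow> L.lb k C1 i = L.lb k C2 i"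
    proof -
      fix i assume i: "1 \<le> i" "i \<le> k"
      have "LamL C1 i = LamL C2 i" using C(3) by simp
      thus "L.lb k C1 i = L.lb k C2 i" using i unfolding LamL_def by simp
    qed
    thus "C1 = C2" using L.lb_inj[OF ktL] C(1,2) unfolding XL_def by blast
  qed
  have img: "LamL ` XL \<subseteq> LamB ` XB"
  proof
    fix u assume "u \<in> LamL ` XL"
    then obtain C where C: "C \<in> L.FC k" "L.Des k C = S" "u = LamL C" unfolding XL_def by blast
    define s where "s = L.lb k C"
    have sinj: "inj_on s {1..k}"
    proof (rule inj_onI)
      fix i j assume ij: "i \<in> {1..k}" "j \<in> {1..k}" "s i = s j"
      show "i = j"
      proof (rule ccontr)
        assume "i \<noteq> j"
        hence "i < j \<or> j < i" by arith
        thus False using L.lb_distinct[OF ktL C(1), of i j] L.lb_distinct[OF ktL C(1), of j i] ij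
          unfolding s_def by auto
      qed
    qed
    have sE: "s ` {1..k} \<subseteq> {1..n}" using L.lb_E[OF ktL C(1)] EL unfolding s_def by auto
    define C' where "C' = (\<lambda>i. Some (s ` {1..i})) ` {1..k}"
    note BC = B_chain[OF r1 rn k1 kr sinj sE, folded C'_def]
    have mL: "L.lb k C (Suc k) \<in> {1..n} - s ` {1..k}"
    proof -
      have "L.lb k C (Suc k) \<in> {1..n}" using L.lb_E[OF ktL C(1), of "Suc k"] EL by simp
      moreover have "L.lb k C (Suc k) \<notin> s ` {1..k}"
      proof
        assume "L.lb k C (Suc k) \<in> s ` {1..k}"
        then obtain i where "i \<in> {1..k}" "L.lb k C (Suc k) = L.lb k C i" unfolding s_def by blast
        thus False using L.lb_distinct[OF ktL C(1), of i "Suc k"] by auto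
      qed
      ultimately show ?thesis by blast
    qed
    have minle: "Min ({1..n} - s ` {1..k}) \<le> L.lb k C (Suc k)"
      using mL by (intro Min_le) auto
    have kD: "L.lb k C (Suc k) < L.lb k C k" using kS C(2) k1 unfolding L.Des_def by blast
    have DB: "B.Des k C' = S"
    proof -
      have "i \<in> B.Des k C' \<longleftrightarrow> i \<in> L.Des k C" for i
      proof (cases "i \<in> {1..k}")
        case False thus ?thesis unfolding B.Des_def L.Des_def by auto
      next
        case True
        show ?thesis
        proof (cases "i = k")
          case True
          have "B.lb k C' (Suc k) < B.lb k C' k"
            using BC(3) BC(2)[OF k1 order.refl] minle kD unfolding s_def by simp
          thus ?thesis using True kS C(2) k1 unfolding B.Des_def by auto
        next
          case False
          hence "Suc i \<le> k" using True by simp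
          hence "B.lb k C' (Suc i) = s (Suc i)" "B.lb k C' i = s i"
            using BC(2) True by auto
          thus ?thesis unfolding B.Des_def L.Des_def s_def using True by simp
        qed
      qed
      thus ?thesis using C(2) by blast
    qed
    have "LamB C' = LamL C"
      unfolding LamB_def LamL_def using BC(2) unfolding s_def by (intro ext) auto
    moreover have "C' \<in> XB" using BC(1) DB unfolding XB_def by blast
    ultimately show "u \<in> LamB ` XB" using C(3) by (metis imageI)
  qed
  have finXB: "finite XB" unfolding XB_def using B.FC_fin[of k] by simp
  have "card XL = card (LamL ` XL)" using card_image[OF injL] by simp
  also have "\<dots> \<le> card (LamB ` XB)" using img finXB by (intro card_mono) auto
  also have "\<dots> \<le> card XB" using finXB by (rule card_image_le)
  finally show ?thesis using hL hB by simp
qed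


end
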